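(* Fix an integer $L\ge 1$ and a real $r\in[0,\frac{L}{L+1})$. There exist an integer $N=N(r,L)$ and a function $g:\mathbb{N}\to[0,\infty)$ with $g(n)\to0$ as $n\to\infty$ such that for every integer $q\ge \max\{2,L\}$ and every $n\ge N$ with $rn\in\mathbb{N}$, every $(r,L)$ list-decodable code $C\subseteq[q]^n$ has $$|C|\le (1+g(n))\,q^{\,n-\lfloor\frac{L+1}{L}rn\rfloor}.$$
   Context: $[q]=\{1,\dots,q\}$. A code is a subset $C\subseteq[q]^n$. The Hamming distance $d(x,y)$ is the number of coordinates where $x,y$ differ, and $B_t(v)$ is the Hamming ball of radius $t$ around $v$ in $[q]^n$. A code $C$ is $(r,L)$ list-decodable if $|B_{rn}(v)\cap C|\le L$ for all $v\in[q]^n$. *)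

theory Defs
  imports Complex_Main "HOL-Library.FuncSet"
begin

text \<open>Words of length n over the alphabet [q] = {1..q}, as extensional functions on the
  coordinate set {0..<n}.\<close>
definition words :: "nat \<Rightarrow> nat \<Rightarrow> (nat \<Rightarrow> nat) set" where
  "words q n = PiE {..<n} (\<lambda>_. {1..q})"

definition hamming_dist :: "nat \<Rightarrow> (nat \<Rightarrow> nat) \<Rightarrow> (nat \<Rightarrow> nat) \<Rightarrow> nat" where
  "hamming_dist n x y = card {i \<in> {..<n}. x i \<noteq> y i}"

definition hamming_ball :: "nat \<Rightarrow> nat \<Rightarrow> real \<Rightarrow> (nat \<Rightarrow> nat) \<Rightarrow> (nat \<Rightarrow> nat) set" where
  "hamming_ball q n t v = {x \<in> words q n. real (hamming_dist n x v) \<le> t}"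

definition list_decodable :: "nat \<Rightarrow> nat \<Rightarrow> real \<Rightarrow> nat \<Rightarrow> (nat \<Rightarrow> nat) set \<Rightarrow> bool" where
  "list_decodable q n r L C \<longleftrightarrow>
     (\<forall>v \<in> words q n. card (hamming_ball q n (r * real n) v \<inter> C) \<le> L)"

end

theory Submission
  imports Defs
begin



definition Dset :: "nat \<Rightarrow> (nat \<Rightarrow> nat) \<Rightarrow> (nat \<Rightarrow> nat) \<Rightarrow> nat set" where
  "Dset n x y = {i \<in> {..<n}. x i \<noteq> y i}"

lemma hd_Dset: "hamming_dist n x y = card (Dset n x y)"
  by (simp add: hamming_dist_def Dset_def)

lemma hd_sym: "hamming_dist n x y = hamming_dist n y x"
  unfolding hamming_dist_def by (simp add: eq_commute)

lemma hd_le: "hamming_dist n x y \<le> n"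
  unfolding hamming_dist_def by (rule order.trans[OF card_mono[of "{..<n}"]]) auto

lemma hd_tri: "hamming_dist n x z \<le> hamming_dist n x y + hamming_dist n y z"
proof -
  have "{i \<in> {..<n}. x i \<noteq> z i} \<subseteq> {i \<in> {..<n}. x i \<noteq> y i} \<union> {i \<in> {..<n}. y i \<noteq> z i}" by auto
  then have "card {i \<in> {..<n}. x i \<noteq> z i} \<le> card ({i \<in> {..<n}. x i \<noteq> y i} \<union> {i \<in> {..<n}. y i \<noteq> z i})"
    by (intro card_mono) auto
  also have "\<dots> \<le> card {i \<in> {..<n}. x i \<noteq> y i} + card {i \<in> {..<n}. y i \<noteq> z i}" by (rule card_Un_le)
  finally show ?thesis unfolding hamming_dist_def .
qed

lemma finite_words: "finite (words q n)"
  unfolding words_def by (intro finite_PiE) auto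

lemma card_words: "card (words q n) = q ^ n"
  unfolding words_def by (simp add: card_PiE)

lemma disjoint_parts:
  fixes S :: "'a set" and a :: "'a \<Rightarrow> nat"
  assumes "finite S"
  shows "finite R \<Longrightarrow> (\<Sum>c\<in>S. a c) \<le> card R \<Longrightarrow> \<exists>P. (\<forall>c\<in>S. P c \<subseteq> R \<and> card (P c) = a c) \<and>
      (\<forall>c\<in>S. \<forall>c'\<in>S. c \<noteq> c' \<longrightarrow> P c \<inter> P c' = {})"
  using assms
proof (induction S arbitrary: R rule: finite_induct)
  case empty
  then show ?case by auto
next
  case (insert c S)
  have sumeq: "(\<Sum>c\<in>insert c S. a c) = a c + (\<Sum>c\<in>S. a c)"
    using insert.hyps by simp
  have "a c \<le> card R" using insert.prems sumeq by linarith
  then obtain T where T: "T \<subseteq> R" "card T = a c" "finite T" by (rule obtain_subset_with_card_n)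
  have cRT: "card (R - T) = card R - a c" using T by (simp add: card_Diff_subset)
  have "(\<Sum>c\<in>S. a c) \<le> card (R - T)" using cRT insert.prems sumeq by linarith
  moreover have "finite (R - T)" using insert.prems by simp
  ultimately have "\<exists>P. (\<forall>c\<in>S. P c \<subseteq> R - T \<and> card (P c) = a c) \<and>
      (\<forall>c\<in>S. \<forall>c'\<in>S. c \<noteq> c' \<longrightarrow> P c \<inter> P c' = {})" using insert.IH by blast
  then obtain P where P: "\<forall>c\<in>S. P c \<subseteq> R - T \<and> card (P c) = a c"
     "\<forall>c\<in>S. \<forall>c'\<in>S. c \<noteq> c' \<longrightarrow> P c \<inter> P c' = {}"
    by blast
  let ?P = "P(c := T)"
  have A: "\<forall>d\<in>insert c S. ?P d \<subseteq> R \<and> card (?P d) = a d"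
  proof
    fix d assume "d \<in> insert c S"
    then show "?P d \<subseteq> R \<and> card (?P d) = a d"
      using P(1) T insert.hyps(2) by (cases "d = c") auto
  qed
  have B: "\<forall>d\<in>insert c S. \<forall>d'\<in>insert c S. d \<noteq> d' \<longrightarrow> ?P d \<inter> ?P d' = {}"
  proof (intro ballI impI)
    fix d d' assume d: "d \<in> insert c S" "d' \<in> insert c S" "d \<noteq> d'"
    show "?P d \<inter> ?P d' = {}"
    proof (cases "d = c")
      case True
      then have "d' \<in> S" using d by auto
      then show ?thesis using True P(1) d(3) by auto
    next
      case False
      then have dS: "d \<in> S" using d by auto
      show ?thesis
      proof (cases "d' = c")
        case True then show ?thesis using dS P(1) False by auto
      next
        case F2: False
        then have "d' \<in> S" using d by auto
        then show ?thesis using dS P(2) False F2 d(3) by auto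
      qed
    qed
  qed
  from A B show ?case by blast
qed

lemma center:
  assumes S: "finite S" "S \<subseteq> words q n" and x: "x \<in> words q n" and R: "R \<subseteq> {..<n}"
    and sum: "(\<Sum>c\<in>S. a c) \<le> card R"
  shows "\<exists>v \<in> words q n. \<forall>c\<in>S. hamming_dist n c v \<le> card {j \<in> {..<n} - R. c j \<noteq> x j} + (card R - a c)"
proof -
  have fR: "finite R" using R finite_subset by blast
  obtain P where P: "\<forall>c\<in>S. P c \<subseteq> R \<and> card (P c) = a c"
     "\<forall>c\<in>S. \<forall>c'\<in>S. c \<noteq> c' \<longrightarrow> P c \<inter> P c' = {}"
    using disjoint_parts[OF S(1) fR sum] by blast
  define v where "v = (\<lambda>j. if j < n then (if \<exists>c\<in>S. j \<in> P c then (SOME c. c \<in> S \<and> j \<in> P c) j else x j) else undefined)"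
  have vw: "v \<in> words q n"
  proof -
    { fix j assume j: "j < n"
      have "v j \<in> {1..q}"
      proof (cases "\<exists>c\<in>S. j \<in> P c")
        case True
        then have "(SOME c. c \<in> S \<and> j \<in> P c) \<in> S" by (metis (mono_tags, lifting) someI_ex)
        then have "(SOME c. c \<in> S \<and> j \<in> P c) \<in> words q n" using S by auto
        then show ?thesis using j True unfolding v_def words_def by (auto simp: PiE_iff)
      next
        case False
        then show ?thesis using j x unfolding v_def words_def by (auto simp: PiE_iff)
      qed }
    then show ?thesis unfolding words_def v_def by (auto simp: PiE_iff extensional_def)
  qed
  have "\<forall>c\<in>S. hamming_dist n c v \<le> card {j \<in> {..<n} - R. c j \<noteq> x j} + (card R - a c)"
  proof
    fix c assume c: "c \<in> S"
    have sub: "{i \<in> {..<n}. c i \<noteq> v i} \<subseteq> {j \<in> {..<n} - R. c j \<noteq> x j} \<union> (R - P c)"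
    proof
      fix i assume i: "i \<in> {i \<in> {..<n}. c i \<noteq> v i}"
      show "i \<in> {j \<in> {..<n} - R. c j \<noteq> x j} \<union> (R - P c)"
      proof (cases "i \<in> R")
        case True
        show ?thesis
        proof (rule ccontr)
          assume "\<not> ?thesis"
          then have "i \<in> P c" using True by auto
          then have ex: "\<exists>c'\<in>S. i \<in> P c'" using c by blast
          have "(SOME c'. c' \<in> S \<and> i \<in> P c') = c"
          proof (rule some_equality)
            show "c \<in> S \<and> i \<in> P c" using c \<open>i \<in> P c\<close> by auto
          next
            fix c' assume "c' \<in> S \<and> i \<in> P c'"
            then show "c' = c" using P(2) c \<open>i \<in> P c\<close> by blast
          qed
          then have "v i = c i" using i ex unfolding v_def by auto
          then show False using i by auto
        qed
      next
        case False
        then have "\<not> (\<exists>c'\<in>S. i \<in> P c')" using P(1) by blast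
        then have "v i = x i" using i unfolding v_def by auto
        then show ?thesis using i False by auto
      qed
    qed
    have "card {i \<in> {..<n}. c i \<noteq> v i} \<le> card ({j \<in> {..<n} - R. c j \<noteq> x j} \<union> (R - P c))"
      by (intro card_mono sub) (use fR in auto)
    also have "\<dots> \<le> card {j \<in> {..<n} - R. c j \<noteq> x j} + card (R - P c)" by (rule card_Un_le)
    also have "card (R - P c) = card R - a c" using P(1) c fR by (metis card_Diff_subset finite_subset)
    finally show "hamming_dist n c v \<le> card {j \<in> {..<n} - R. c j \<noteq> x j} + (card R - a c)"
      unfolding hamming_dist_def .
  qed
  then show ?thesis using vw by blast
qed


definition ld :: "nat \<Rightarrow> nat \<Rightarrow> nat \<Rightarrow> nat \<Rightarrow> (nat \<Rightarrow> nat) set \<Rightarrow> bool" where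
  "ld q n t L C \<longleftrightarrow> (\<forall>v\<in>words q n. card {c\<in>C. hamming_dist n c v \<le> t} \<le> L)"

lemma ld_ball_contra:
  assumes "ld q n t L C" "v \<in> words q n" "S \<subseteq> C" "\<forall>c\<in>S. hamming_dist n c v \<le> t" "finite C" "card S > L"
  shows False
proof -
  have "S \<subseteq> {c\<in>C. hamming_dist n c v \<le> t}" using assms(3,4) by blast
  then have "card S \<le> card {c\<in>C. hamming_dist n c v \<le> t}" using assms(5) by (intro card_mono) auto
  also have "\<dots> \<le> L" using assms(1,2) unfolding ld_def by auto
  finally show False using assms(6) by simp
qed

lemma card_fibers_le:
  assumes "finite C" "\<And>y. y \<in> p ` C \<Longrightarrow> card {c\<in>C. p c = y} \<le> L"
  shows "card C \<le> L * card (p ` C)"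
proof -
  have eq: "C = (\<Union>y\<in>p ` C. {c\<in>C. p c = y})" by auto
  have "card (\<Union>y\<in>p ` C. {c\<in>C. p c = y}) \<le> (\<Sum>y\<in>p ` C. card {c\<in>C. p c = y})"
    by (rule card_UN_le) (use assms(1) in simp)
  then have "card C \<le> (\<Sum>y\<in>p ` C. card {c\<in>C. p c = y})" using eq by simp
  also have "\<dots> \<le> (\<Sum>y\<in>p ` C. L)" by (intro sum_mono assms(2))
  finally show ?thesis by (simp add: mult.commute)
qed

lemma singleton_plain:
  assumes C: "C \<subseteq> words q n" and ldC: "ld q n t L C" and s: "s \<le> n" "L*s \<le> (L+1)*t"
  shows "card C \<le> L * q^(n-s)"
proof -
  have fC: "finite C" using C finite_words finite_subset by blast
  define A where "A = {s..<n}"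
  define p where "p = (\<lambda>c::nat\<Rightarrow>nat. restrict c A)"
  have fib: "card {c\<in>C. p c = y} \<le> L" if "y \<in> p ` C" for y
  proof (rule ccontr)
    assume "\<not> ?thesis"
    then have "L + 1 \<le> card {c\<in>C. p c = y}" by simp
    then obtain S where S: "S \<subseteq> {c\<in>C. p c = y}" "card S = L + 1" "finite S"
      by (rule obtain_subset_with_card_n)
    have "S \<noteq> {}" using S(2) by auto
    then obtain x where xS: "x \<in> S" by blast
    have SC: "S \<subseteq> C" using S by auto
    have xw: "x \<in> words q n" using xS SC C by auto
    have ar: "(L+1)*(s-t) \<le> s"
    proof (cases "t \<le> s")
      case True
      have "(L+1)*(s-t) + (L+1)*t = (L+1)*s" using True by (metis add_mult_distrib2 le_add_diff_inverse2)
      moreover have "(L+1)*s = L*s + s" by simp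
      ultimately show ?thesis using s(2) by linarith
    next
      case False then show ?thesis by simp
    qed
    have sumS: "(\<Sum>c\<in>S. s - t) \<le> card {..<s}"
      using ar S(2) by simp
    have SW: "S \<subseteq> words q n" using SC C by (rule order.trans)
    have sub: "{..<s} \<subseteq> {..<n}" using s(1) by auto
    obtain v where v: "v \<in> words q n"
      "\<forall>c\<in>S. hamming_dist n c v \<le> card {j \<in> {..<n} - {..<s}. c j \<noteq> x j} + (card {..<s} - (s - t))"
      using center[OF S(3) SW xw sub sumS] by blast
    have "\<forall>c\<in>S. hamming_dist n c v \<le> t"
    proof
      fix c assume c: "c \<in> S"
      have "p c = p x" using S c xS by auto
      have "{j \<in> {..<n} - {..<s}. c j \<noteq> x j} = {}"
      proof (rule ccontr)
        assume "\<not> ?thesis"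
        then obtain j where j: "j \<in> {..<n} - {..<s}" "c j \<noteq> x j" by blast
        then have "j \<in> A" unfolding A_def by auto
        then have "p c j = c j" "p x j = x j" unfolding p_def by auto
        then show False using \<open>p c = p x\<close> j(2) by metis
      qed
      then have "card {j \<in> {..<n} - {..<s}. c j \<noteq> x j} = 0" by simp
      moreover have "card {..<s} - (s - t) \<le> t" by simp
      moreover have "hamming_dist n c v \<le> card {j \<in> {..<n} - {..<s}. c j \<noteq> x j} + (card {..<s} - (s - t))"
        using v(2) c by blast
      ultimately show "hamming_dist n c v \<le> t" by linarith
    qed
    from ld_ball_contra[OF ldC v(1) SC this fC] S(2) show False by simp
  qed
  have "card C \<le> L * card (p ` C)" by (rule card_fibers_le[OF fC fib])
  also have "card (p ` C) \<le> card (PiE A (\<lambda>_. {1..q}))"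
  proof (rule card_mono)
    show "finite (PiE A (\<lambda>_. {1..q}))" by (intro finite_PiE) (auto simp: A_def)
    show "p ` C \<subseteq> PiE A (\<lambda>_. {1..q})" using C unfolding p_def A_def words_def by (auto simp: PiE_iff)
  qed
  also have "card (PiE A (\<lambda>_. {1..q})) = q^(n-s)" by (simp add: card_PiE A_def)
  finally show ?thesis by simp
qed

lemma ar1: "L*s \<le> (L+1)*(t::nat) \<Longrightarrow> (L+1)*(s-t) \<le> s"
proof (cases "t \<le> s")
  case True
  assume a: "L*s \<le> (L+1)*t"
  have "(L+1)*(s-t) + (L+1)*t = (L+1)*s" using True by (metis add_mult_distrib2 le_add_diff_inverse2)
  moreover have "(L+1)*s = L*s + s" by simp
  ultimately show ?thesis using a by linarith
next
  case False then show ?thesis by simp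
qed

lemma card_filter_sum: "finite A \<Longrightarrow> card {a\<in>A. P a} = (\<Sum>a\<in>A. if P a then 1 else 0)"
  using sum.inter_filter[of A "\<lambda>_. (1::nat)" P] by simp

lemma star:
  assumes C: "C \<subseteq> words q n" and ldC: "ld q n t L C" and x: "x \<in> C"
    and U: "U \<subseteq> {..<n}" "card U + s = n + 1" and s: "1 \<le> s" "L*s \<le> (L+1)*t" and L1: "1 \<le> L"
  shows "card {y \<in> C - {x}. card (U \<inter> Dset n x y) \<le> 1} + 1 \<le> L"
proof (rule ccontr)
  assume "\<not> ?thesis"
  then have "L \<le> card {y \<in> C - {x}. card (U \<inter> Dset n x y) \<le> 1}" by simp
  then obtain Y where Y: "Y \<subseteq> {y \<in> C - {x}. card (U \<inter> Dset n x y) \<le> 1}" "card Y = L" "finite Y"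
    by (rule obtain_subset_with_card_n)
  have fC: "finite C" using C finite_words finite_subset by blast
  have xY: "x \<notin> Y" using Y(1) by auto
  define S where "S = insert x Y"
  have fS: "finite S" using Y(3) S_def by simp
  have cS: "card S = L + 1" using Y(2,3) xY S_def by simp
  have SC: "S \<subseteq> C" using Y(1) x S_def by auto
  have SW: "S \<subseteq> words q n" using SC C by (rule order.trans)
  have xw: "x \<in> words q n" using x C by auto
  define R where "R = {..<n} - U"
  have fU: "finite U" using U(1) finite_subset by blast
  have cR: "card R = s - 1" unfolding R_def using U fU by (simp add: card_Diff_subset)
  have RU: "{..<n} - R = U" unfolding R_def using U(1) by auto
  have Rsub: "R \<subseteq> {..<n}" unfolding R_def by auto
  define a where "a = (\<lambda>c. if c = x then (s - 1) - t else s - t)"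
  have "(\<Sum>c\<in>S. a c) = a x + (\<Sum>c\<in>Y. a c)" unfolding S_def using Y(3) xY by simp
  also have "(\<Sum>c\<in>Y. a c) = (\<Sum>c\<in>Y. s - t)" unfolding a_def using xY by (intro sum.cong) auto
  also have "\<dots> = L * (s - t)" using Y(2) by simp
  finally have sumeq: "(\<Sum>c\<in>S. a c) = (s - 1 - t) + L * (s - t)" unfolding a_def by simp
  have ar: "(L+1)*(s-t) \<le> s" using ar1[OF s(2)] .
  have "(s - 1 - t) + L * (s - t) \<le> s - 1"
  proof (cases "t < s")
    case True
    have "(L+1)*(s-t) = L*(s-t) + (s-t)" by simp
    then show ?thesis using ar True by linarith
  next
    case False then show ?thesis by simp
  qed
  then have sumS: "(\<Sum>c\<in>S. a c) \<le> card R" using sumeq cR by simp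
  obtain v where v: "v \<in> words q n"
      "\<forall>c\<in>S. hamming_dist n c v \<le> card {j \<in> {..<n} - R. c j \<noteq> x j} + (card R - a c)"
    using center[OF fS SW xw Rsub sumS] by blast
  have "\<forall>c\<in>S. hamming_dist n c v \<le> t"
  proof
    fix c assume c: "c \<in> S"
    have hb: "hamming_dist n c v \<le> card {j \<in> U. c j \<noteq> x j} + (card R - a c)"
      using v(2) c RU by auto
    show "hamming_dist n c v \<le> t"
    proof (cases "c = x")
      case True
      then have "card {j \<in> U. c j \<noteq> x j} = 0" by simp
      moreover have "card R - a c \<le> t" using True cR unfolding a_def by simp
      ultimately show ?thesis using hb by linarith
    next
      case False
      then have cY: "c \<in> Y" using c S_def by auto
      have "1 \<le> L * s" using s(1) L1 by simp
      then have "1 \<le> t" using s(2) by (cases "t = 0") simp_all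
      have "{j \<in> U. c j \<noteq> x j} = U \<inter> Dset n x c" unfolding Dset_def using U(1) by auto
      then have "card {j \<in> U. c j \<noteq> x j} \<le> 1" using Y(1) cY by auto
      moreover have "card R - a c = (s - 1) - (s - t)" using False cR unfolding a_def by simp
      moreover have "1 + ((s - 1) - (s - t)) \<le> t" using s(1) \<open>1 \<le> t\<close> by arith
      ultimately show ?thesis using hb by linarith
    qed
  qed
  from ld_ball_contra[OF ldC v(1) SC this fC] cS show False by simp
qed

lemma far_sum:
  assumes C: "C \<subseteq> words q n" and ldC: "ld q n t L C" and x: "x \<in> C"
    and ks: "k + s = n" and s: "1 \<le> s" "L*s \<le> (L+1)*t" and L1: "1 \<le> L"
  shows "(\<Sum>y\<in>C - {x}. ((n - hamming_dist n x y) choose k) * hamming_dist n x y) + (n choose (k+1))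
     \<le> L * (n choose (k+1))"
proof -
  have fC: "finite C" using C finite_words finite_subset by blast
  define K1 where "K1 = {U. U \<subseteq> {..<n} \<and> card U = k+1}"
  have fK1: "finite K1" unfolding K1_def by (rule finite_subset[of _ "Pow {..<n}"]) auto
  have cK1: "card K1 = n choose (k+1)" unfolding K1_def using n_subsets[of "{..<n}" "k+1"] by simp
  define P where "P = (\<lambda>y U. card (U \<inter> Dset n x y) \<le> 1)"
  have one: "((n - hamming_dist n x y) choose k) * hamming_dist n x y \<le> card {U\<in>K1. P y U}" for y
  proof -
    define D where "D = Dset n x y"
    define Ag where "Ag = {..<n} - D"
    define Bs where "Bs = {B. B \<subseteq> Ag \<and> card B = k}"
    have Dsub: "D \<subseteq> {..<n}" unfolding D_def Dset_def by auto
    have fD: "finite D" using Dsub finite_subset by blast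
    have fAg: "finite Ag" unfolding Ag_def by simp
    have cAg: "card Ag = n - card D" unfolding Ag_def using Dsub fD by (simp add: card_Diff_subset)
    have cBs: "card Bs = (n - card D) choose k" unfolding Bs_def using n_subsets[OF fAg, of k] cAg by simp
    have hdD: "hamming_dist n x y = card D" unfolding D_def by (rule hd_Dset)
    define f where "f = (\<lambda>(j::nat, B::nat set). insert j B)"
    have inj: "inj_on f (D \<times> Bs)"
    proof (rule inj_onI)
      fix p1 p2 assume p1: "p1 \<in> D \<times> Bs" and p2: "p2 \<in> D \<times> Bs" and eq: "f p1 = f p2"
      obtain j B where jB: "p1 = (j, B)" by (cases p1)
      obtain j' B' where jB': "p2 = (j', B')" by (cases p2)
      have j: "j \<in> D" "B \<subseteq> Ag" using p1 jB Bs_def by auto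
      have j': "j' \<in> D" "B' \<subseteq> Ag" using p2 jB' Bs_def by auto
      have e: "insert j B = insert j' B'" using eq jB jB' f_def by simp
      have "insert j B \<inter> D = {j}" using j Ag_def by auto
      moreover have "insert j' B' \<inter> D = {j'}" using j' Ag_def by auto
      ultimately have "j = j'" using e by auto
      moreover have "B = insert j B \<inter> Ag" using j Ag_def by auto
      moreover have "B' = insert j' B' \<inter> Ag" using j' Ag_def by auto
      ultimately show "p1 = p2" using e jB jB' by simp
    qed
    have img: "f ` (D \<times> Bs) \<subseteq> {U\<in>K1. P y U}"
    proof
      fix U assume "U \<in> f ` (D \<times> Bs)"
      then obtain j B where jB: "j \<in> D" "B \<in> Bs" "U = insert j B" unfolding f_def by auto
      have BA: "B \<subseteq> Ag" "card B = k" using jB(2) Bs_def by auto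
      have jn: "j \<notin> B" using jB(1) BA Ag_def by auto
      have fB: "finite B" using BA fAg finite_subset by blast
      have "U \<subseteq> {..<n}" using jB(1,3) BA Dsub Ag_def by auto
      moreover have "card U = k + 1" using jB(3) jn fB BA by simp
      moreover have "U \<inter> D = {j}" using jB BA Ag_def by auto
      ultimately show "U \<in> {U\<in>K1. P y U}" unfolding K1_def P_def D_def[symmetric] by simp
    qed
    have "card D * ((n - card D) choose k) = card (D \<times> Bs)" using cBs by (simp add: card_cartesian_product)
    also have "\<dots> = card (f ` (D \<times> Bs))" using inj by (simp add: card_image)
    also have "\<dots> \<le> card {U\<in>K1. P y U}" by (rule card_mono) (use fK1 img in auto)
    finally show ?thesis using hdD by (simp add: mult.commute)
  qed
  have "(\<Sum>y\<in>C - {x}. ((n - hamming_dist n x y) choose k) * hamming_dist n x y)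
      \<le> (\<Sum>y\<in>C - {x}. card {U\<in>K1. P y U})" by (intro sum_mono one)
  also have "\<dots> = (\<Sum>y\<in>C - {x}. \<Sum>U\<in>K1. if P y U then 1 else 0)"
    by (intro sum.cong refl card_filter_sum fK1)
  also have "\<dots> = (\<Sum>U\<in>K1. \<Sum>y\<in>C - {x}. if P y U then 1 else 0)" by (rule sum.swap)
  also have "\<dots> = (\<Sum>U\<in>K1. card {y\<in>C - {x}. P y U})"
    by (intro sum.cong refl card_filter_sum[symmetric]) (use fC in simp)
  also have "\<dots> \<le> (\<Sum>U\<in>K1. L - 1)"
  proof (intro sum_mono)
    fix U assume "U \<in> K1"
    then have U: "U \<subseteq> {..<n}" "card U + s = n + 1" unfolding K1_def using ks by auto
    show "card {y\<in>C - {x}. P y U} \<le> L - 1" using star[OF C ldC x U s L1] unfolding P_def by simp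
  qed
  also have "\<dots> = (L - 1) * (n choose (k+1))" using cK1 by simp
  finally have "(\<Sum>y\<in>C - {x}. ((n - hamming_dist n x y) choose k) * hamming_dist n x y) \<le> (L - 1) * (n choose (k+1))" .
  moreover have "(L - 1) * (n choose (k+1)) + (n choose (k+1)) = L * (n choose (k+1))"
    using L1 by (cases L) simp_all
  ultimately show ?thesis by linarith
qed

lemma proj_bound:
  assumes C: "C \<subseteq> words q n" and A: "A \<subseteq> {..<n}" "card A = k"
  shows "card C \<le> q^k + card {x\<in>C. \<exists>y\<in>C. y \<noteq> x \<and> (\<forall>j\<in>A. x j = y j)}"
proof -
  have fC: "finite C" using C finite_words finite_subset by blast
  define M where "M = {x\<in>C. \<exists>y\<in>C. y \<noteq> x \<and> (\<forall>j\<in>A. x j = y j)}"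
  define p where "p = (\<lambda>c::nat\<Rightarrow>nat. restrict c A)"
  have inj: "inj_on p (C - M)"
  proof (rule inj_onI)
    fix x y assume x: "x \<in> C - M" and y: "y \<in> C - M" and e: "p x = p y"
    show "x = y"
    proof (rule ccontr)
      assume ne: "x \<noteq> y"
      have "\<forall>j\<in>A. x j = y j"
      proof
        fix j assume "j \<in> A"
        then have "p x j = x j" "p y j = y j" unfolding p_def by auto
        then show "x j = y j" using e by simp
      qed
      then have "x \<in> M" using x y ne unfolding M_def by auto
      then show False using x by simp
    qed
  qed
  have fA: "finite A" using A(1) finite_subset by blast
  have "card (C - M) = card (p ` (C - M))" using inj by (simp add: card_image)
  also have "\<dots> \<le> card (PiE A (\<lambda>_. {1..q}))"
  proof (rule card_mono)
    show "finite (PiE A (\<lambda>_. {1..q}))" using fA by (intro finite_PiE) auto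
    show "p ` (C - M) \<subseteq> PiE A (\<lambda>_. {1..q})"
    proof
      fix z assume "z \<in> p ` (C - M)"
      then obtain c where c: "c \<in> C" "z = p c" by auto
      have "c \<in> words q n" using c C by auto
      then have "\<forall>j<n. c j \<in> {1..q}" unfolding words_def by (auto simp: PiE_iff)
      then show "z \<in> PiE A (\<lambda>_. {1..q})" using c A(1) unfolding p_def by (auto simp: PiE_iff)
    qed
  qed
  also have "card (PiE A (\<lambda>_. {1..q})) = q^k" using fA A(2) by (simp add: card_PiE)
  finally have "card (C - M) \<le> q^k" .
  moreover have MC: "M \<subseteq> C" unfolding M_def by auto
  moreover have "card (C - M) = card C - card M" using MC fC by (simp add: card_Diff_subset finite_subset)
  moreover have "card M \<le> card C" using MC fC by (simp add: card_mono)
  ultimately show ?thesis unfolding M_def by linarith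
qed

lemma count_agree:
  "card {A. A \<subseteq> {..<n} \<and> card A = k \<and> (\<forall>j\<in>A. x j = y j)} = (n - hamming_dist n x y) choose k"
proof -
  define Ag where "Ag = {..<n} - Dset n x y"
  have Dsub: "Dset n x y \<subseteq> {..<n}" unfolding Dset_def by auto
  have fD: "finite (Dset n x y)" using Dsub finite_subset by blast
  have cAg: "card Ag = n - hamming_dist n x y" unfolding Ag_def hd_Dset using Dsub fD
    by (simp add: card_Diff_subset)
  have "{A. A \<subseteq> {..<n} \<and> card A = k \<and> (\<forall>j\<in>A. x j = y j)} = {A. A \<subseteq> Ag \<and> card A = k}"
    unfolding Ag_def Dset_def by auto
  moreover have "finite Ag" unfolding Ag_def by simp
  ultimately show ?thesis using n_subsets[of Ag k] cAg by simp
qed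

lemma main_count:
  assumes C: "C \<subseteq> words q n" and kn: "k \<le> n"
  shows "(n choose k) * card C \<le> (n choose k) * q^k + (\<Sum>x\<in>C. \<Sum>y\<in>C - {x}. (n - hamming_dist n x y) choose k)"
proof -
  have fC: "finite C" using C finite_words finite_subset by blast
  define K where "K = {A. A \<subseteq> {..<n} \<and> card A = k}"
  have fK: "finite K" unfolding K_def by (rule finite_subset[of _ "Pow {..<n}"]) auto
  have cK: "card K = n choose k" unfolding K_def using n_subsets[of "{..<n}" k] by simp
  define ag where "ag = (\<lambda>x y A. \<forall>j\<in>A. (x::nat\<Rightarrow>nat) j = y j)"
  define M where "M = (\<lambda>A. {x\<in>C. \<exists>y\<in>C. y \<noteq> x \<and> ag x y A})"
  have "(n choose k) * card C = (\<Sum>A\<in>K. card C)" using cK by simp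
  also have "\<dots> \<le> (\<Sum>A\<in>K. q^k + card (M A))"
  proof (rule sum_mono)
    fix A assume "A \<in> K"
    then have "A \<subseteq> {..<n}" "card A = k" unfolding K_def by auto
    from proj_bound[OF C this] show "card C \<le> q^k + card (M A)" unfolding M_def ag_def .
  qed
  also have "\<dots> = (n choose k) * q^k + (\<Sum>A\<in>K. card (M A))" using cK by (simp add: sum.distrib)
  also have "(\<Sum>A\<in>K. card (M A)) = (\<Sum>A\<in>K. \<Sum>x\<in>C. if x \<in> M A then 1 else 0)"
  proof (rule sum.cong[OF refl])
    fix A assume "A \<in> K"
    have "M A = {x\<in>C. x \<in> M A}" unfolding M_def by auto
    then show "card (M A) = (\<Sum>x\<in>C. if x \<in> M A then 1 else 0)"
      using card_filter_sum[OF fC, of "\<lambda>x. x \<in> M A"] by simp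
  qed
  also have "\<dots> = (\<Sum>x\<in>C. \<Sum>A\<in>K. if x \<in> M A then 1 else 0)" by (rule sum.swap)
  also have "\<dots> = (\<Sum>x\<in>C. card {A\<in>K. x \<in> M A})"
    by (intro sum.cong refl card_filter_sum[symmetric] fK)
  also have "\<dots> \<le> (\<Sum>x\<in>C. \<Sum>y\<in>C - {x}. (n - hamming_dist n x y) choose k)"
  proof (rule sum_mono)
    fix x assume x: "x \<in> C"
    have "{A\<in>K. x \<in> M A} \<subseteq> (\<Union>y\<in>C - {x}. {A. A \<subseteq> {..<n} \<and> card A = k \<and> (\<forall>j\<in>A. x j = y j)})"
      unfolding M_def K_def ag_def by auto
    then have "card {A\<in>K. x \<in> M A} \<le> card (\<Union>y\<in>C - {x}. {A. A \<subseteq> {..<n} \<and> card A = k \<and> (\<forall>j\<in>A. x j = y j)})"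
    proof (rule card_mono[rotated])
      show "finite (\<Union>y\<in>C - {x}. {A. A \<subseteq> {..<n} \<and> card A = k \<and> (\<forall>j\<in>A. x j = y j)})"
        by (rule finite_subset[of _ "Pow {..<n}"]) auto
    qed
    also have "\<dots> \<le> (\<Sum>y\<in>C - {x}. card {A. A \<subseteq> {..<n} \<and> card A = k \<and> (\<forall>j\<in>A. x j = y j)})"
      by (rule card_UN_le) (use fC in simp)
    also have "\<dots> = (\<Sum>y\<in>C - {x}. (n - hamming_dist n x y) choose k)"
      by (intro sum.cong refl count_agree)
    finally show "card {A\<in>K. x \<in> M A} \<le> (\<Sum>y\<in>C - {x}. (n - hamming_dist n x y) choose k)" .
  qed
  finally show ?thesis by simp
qed

lemma X_bound:
  assumes C: "C \<subseteq> words q n" and ldC: "ld q n t L C" and d: "2*\<delta> \<le> t"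
    and s2: "s2 \<le> n" "(L div 2)*s2 \<le> (L div 2 + 1)*(t - \<delta>)"
  shows "card {x\<in>C. \<exists>y\<in>C. y \<noteq> x \<and> hamming_dist n x y \<le> \<delta>} \<le> L * ((L div 2) * q^(n - s2))"
proof -
  define X where "X = {x\<in>C. \<exists>y\<in>C. y \<noteq> x \<and> hamming_dist n x y \<le> \<delta>}"
  have fC: "finite C" using C finite_words finite_subset by blast
  have XC: "X \<subseteq> C" unfolding X_def by auto
  have fX: "finite X" using XC fC finite_subset by blast
  define sep where "sep = (\<lambda>Z. \<forall>z1\<in>Z. \<forall>z2\<in>Z. z1 \<noteq> z2 \<longrightarrow> 2*\<delta> < hamming_dist n z1 z2)"
  define F where "F = {Z. Z \<subseteq> X \<and> sep Z}"
  have fF: "finite F"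
  proof (rule finite_subset[of _ "Pow X"])
    show "F \<subseteq> Pow X" unfolding F_def by auto
    show "finite (Pow X)" using fX by simp
  qed
  have eF: "{} \<in> F" unfolding F_def sep_def by auto
  define Z where "Z = (SOME Z. Z \<in> F \<and> card Z = Max (card ` F))"
  have "\<exists>Z. Z \<in> F \<and> card Z = Max (card ` F)"
  proof -
    have "Max (card ` F) \<in> card ` F" using fF eF by (intro Max_in) auto
    then show ?thesis by auto
  qed
  then have Z0: "Z \<in> F \<and> card Z = Max (card ` F)" unfolding Z_def by (rule someI_ex)
  then have Z: "Z \<in> F" "card Z = Max (card ` F)" by auto
  have Zmax: "card Z' \<le> card Z" if "Z' \<in> F" for Z'
    using Z(2) that fF Max_ge[of "card ` F" "card Z'"] by simp
  have ZX: "Z \<subseteq> X" and sepZ: "sep Z" using Z(1) unfolding F_def by auto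
  have fZ: "finite Z" using ZX fX finite_subset by blast
  have ZC: "Z \<subseteq> C" using ZX XC by blast
  have cover: "\<exists>z\<in>Z. hamming_dist n x z \<le> 2*\<delta>" if x: "x \<in> X" for x
  proof (rule ccontr)
    assume nc: "\<not> ?thesis"
    have hd0: "hamming_dist n x x = 0" unfolding hamming_dist_def by simp
    have xZ: "x \<notin> Z"
    proof
      assume "x \<in> Z"
      then have "\<exists>z\<in>Z. hamming_dist n x z \<le> 2*\<delta>" using hd0 by (intro bexI[of _ x]) simp_all
      then show False using nc by blast
    qed
    have "sep (insert x Z)" unfolding sep_def
    proof (intro ballI impI)
      fix z1 z2 assume z: "z1 \<in> insert x Z" "z2 \<in> insert x Z" "z1 \<noteq> z2"
      show "2*\<delta> < hamming_dist n z1 z2"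
      proof (cases "z1 = x")
        case True
        then have "z2 \<in> Z" using z by auto
        then have "\<not> hamming_dist n x z2 \<le> 2*\<delta>" using nc by blast
        then show ?thesis using True by simp
      next
        case False
        then have z1Z: "z1 \<in> Z" using z by auto
        show ?thesis
        proof (cases "z2 = x")
          case True
          have "\<not> hamming_dist n x z1 \<le> 2*\<delta>" using nc z1Z by blast
          then have "2*\<delta> < hamming_dist n x z1" by simp
          then show ?thesis using True hd_sym[of n x z1] by simp
        next
          case False
          then have "z2 \<in> Z" using z by auto
          then show ?thesis using sepZ z1Z z(3) unfolding sep_def by blast
        qed
      qed
    qed
    then have "insert x Z \<in> F" using x ZX unfolding F_def by auto
    then have "card (insert x Z) \<le> card Z" by (rule Zmax)
    then show False using xZ fZ by simp
  qed
  have "X \<subseteq> (\<Union>z\<in>Z. {c\<in>C. hamming_dist n c z \<le> t})"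
  proof
    fix x assume x: "x \<in> X"
    then obtain z where z: "z \<in> Z" "hamming_dist n x z \<le> 2*\<delta>" using cover by blast
    then have "hamming_dist n x z \<le> t" using d by linarith
    then show "x \<in> (\<Union>z\<in>Z. {c\<in>C. hamming_dist n c z \<le> t})" using x XC z(1) by blast
  qed
  then have "card X \<le> card (\<Union>z\<in>Z. {c\<in>C. hamming_dist n c z \<le> t})"
    by (rule card_mono[rotated]) (use fC fZ in auto)
  also have "\<dots> \<le> (\<Sum>z\<in>Z. card {c\<in>C. hamming_dist n c z \<le> t})" by (rule card_UN_le[OF fZ])
  also have "\<dots> \<le> (\<Sum>z\<in>Z. L)"
  proof (rule sum_mono)
    fix z assume "z \<in> Z"
    then have "z \<in> words q n" using ZC C by auto
    then show "card {c\<in>C. hamming_dist n c z \<le> t} \<le> L" using ldC unfolding ld_def by blast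
  qed
  also have "\<dots> = L * card Z" by simp
  finally have cX: "card X \<le> L * card Z" .
  have ldZ: "ld q n (t - \<delta>) (L div 2) Z" unfolding ld_def
  proof
    fix v assume v: "v \<in> words q n"
    define W where "W = {z\<in>Z. hamming_dist n z v \<le> t - \<delta>}"
    have WX: "W \<subseteq> X" using ZX W_def by auto
    have "\<forall>z\<in>W. \<exists>y. y \<in> C \<and> y \<noteq> z \<and> hamming_dist n z y \<le> \<delta>" using WX unfolding X_def by blast
    from bchoice[OF this] obtain m where m: "\<forall>z\<in>W. m z \<in> C \<and> m z \<noteq> z \<and> hamming_dist n z (m z) \<le> \<delta>" by blast
    have fW: "finite W" using fZ W_def by simp
    have dis: "W \<inter> m ` W = {}"
    proof (rule ccontr)
      assume "\<not> ?thesis"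
      then obtain z1 where z1: "z1 \<in> W" "m z1 \<in> W" by auto
      have "m z1 \<noteq> z1" "hamming_dist n z1 (m z1) \<le> \<delta>" using m z1(1) by auto
      moreover have "z1 \<in> Z" "m z1 \<in> Z" using z1 W_def by auto
      ultimately have "2*\<delta> < hamming_dist n z1 (m z1)" using sepZ unfolding sep_def by metis
      then show False using \<open>hamming_dist n z1 (m z1) \<le> \<delta>\<close> by simp
    qed
    have injm: "inj_on m W"
    proof (rule inj_onI)
      fix z1 z2 assume z: "z1 \<in> W" "z2 \<in> W" "m z1 = m z2"
      show "z1 = z2"
      proof (rule ccontr)
        assume ne: "z1 \<noteq> z2"
        have "hamming_dist n z1 z2 \<le> hamming_dist n z1 (m z1) + hamming_dist n (m z1) z2" by (rule hd_tri)
        moreover have "hamming_dist n (m z1) z2 = hamming_dist n z2 (m z2)" using z(3) hd_sym[of n "m z2" z2] by simp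
        moreover have "hamming_dist n z1 (m z1) \<le> \<delta>" "hamming_dist n z2 (m z2) \<le> \<delta>" using m z by auto
        moreover have "z1 \<in> Z" "z2 \<in> Z" using z W_def by auto
        moreover have "2*\<delta> < hamming_dist n z1 z2" using sepZ ne \<open>z1 \<in> Z\<close> \<open>z2 \<in> Z\<close> unfolding sep_def by blast
        ultimately show False by linarith
      qed
    qed
    have sub: "W \<union> m ` W \<subseteq> {c\<in>C. hamming_dist n c v \<le> t}"
    proof
      fix c assume "c \<in> W \<union> m ` W"
      then show "c \<in> {c\<in>C. hamming_dist n c v \<le> t}"
      proof
        assume "c \<in> W"
        then show ?thesis using W_def ZC by auto
      next
        assume "c \<in> m ` W"
        then obtain z where z: "z \<in> W" "c = m z" by auto
        have "hamming_dist n c v \<le> hamming_dist n c z + hamming_dist n z v" by (rule hd_tri)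
        moreover have "hamming_dist n c z \<le> \<delta>" using m z hd_sym[of n c z] by simp
        moreover have "hamming_dist n z v \<le> t - \<delta>" using z W_def by auto
        ultimately have "hamming_dist n c v \<le> t" using d by linarith
        then show ?thesis using m z by auto
      qed
    qed
    have "card (W \<union> m ` W) = card W + card (m ` W)" using dis fW by (simp add: card_Un_disjoint)
    also have "card (m ` W) = card W" using injm by (simp add: card_image)
    finally have "2 * card W = card (W \<union> m ` W)" by simp
    also have "\<dots> \<le> card {c\<in>C. hamming_dist n c v \<le> t}" by (rule card_mono[OF _ sub]) (use fC in auto)
    also have "\<dots> \<le> L" using ldC v unfolding ld_def by blast
    finally have "2 * card W \<le> L" .
    then show "card {c\<in>Z. hamming_dist n c v \<le> t - \<delta>} \<le> L div 2" unfolding W_def by linarith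
  qed
  have "card Z \<le> (L div 2) * q^(n - s2)"
    by (rule singleton_plain[OF _ ldZ s2]) (use ZC C in auto)
  then show ?thesis using cX unfolding X_def[symmetric]
    by (meson le_trans mult_le_mono2)
qed

lemma binom_shift: "(k+1) * (n choose (k+1)) = (n - k) * (n choose k)"
  using binomial_absorption[of k n] binomial_absorb_comp[of n k] by simp

lemma final_arith:
  fixes B c Q S d l X B1 k1 m :: nat
  assumes Bpos: "B > 0" and M: "B*c \<le> B*Q + S" and T: "d*S \<le> d*B*l*X + c*(l*B1)" and sh: "k1*B1 = m*B"
  shows "k1*d*c \<le> k1*d*(Q + l*X) + l*m*c"
proof -
  have "B * (k1*d*c) = k1*d*(B*c)" by (simp add: ac_simps)
  also have "\<dots> \<le> k1*d*(B*Q + S)" using M by (intro mult_le_mono2)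
  also have "\<dots> = k1*d*B*Q + k1*(d*S)" by (simp add: algebra_simps)
  also have "\<dots> \<le> k1*d*B*Q + k1*(d*B*l*X + c*(l*B1))" using T by simp
  also have "\<dots> = B*(k1*d*(Q + l*X)) + c*l*(k1*B1)" by (simp add: algebra_simps)
  also have "\<dots> = B*(k1*d*(Q + l*X)) + c*l*(m*B)" using sh by simp
  also have "\<dots> = B*(k1*d*(Q + l*X) + l*m*c)" by (simp add: algebra_simps)
  finally show ?thesis using Bpos by simp
qed

lemma key_bound:
  assumes C: "C \<subseteq> words q n" and ldC: "ld q n t L C" and ks: "k + s = n" and s: "1 \<le> s" "L*s \<le> (L+1)*t"
    and L1: "1 \<le> L" and dt: "\<delta> \<le> t"
  shows "(k+1)*(\<delta>+1)*card C \<le> (k+1)*(\<delta>+1)*(q^k + (L-1)*card {x\<in>C. \<exists>y\<in>C. y \<noteq> x \<and> hamming_dist n x y \<le> \<delta>})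
           + (L-1)*(n-k)*card C"
proof -
  define X where "X = {x\<in>C. \<exists>y\<in>C. y \<noteq> x \<and> hamming_dist n x y \<le> \<delta>}"
  have fC: "finite C" using C finite_words finite_subset by blast
  define B where "B = n choose k"
  define B1 where "B1 = n choose (k+1)"
  have kn: "k \<le> n" using ks by simp
  have Bpos: "B > 0" unfolding B_def using kn by simp
  define b where "b = (\<lambda>x y. (n - hamming_dist n x y) choose k)"
  have per: "(\<delta>+1) * (\<Sum>y\<in>C - {x}. b x y) \<le> (\<delta>+1) * B * (L-1) * (if x \<in> X then 1 else 0) + (L-1) * B1"
    if x: "x \<in> C" for x
  proof -
    define Cl where "Cl = {y\<in>C - {x}. hamming_dist n x y \<le> \<delta>}"
    define Fa where "Fa = {y\<in>C - {x}. \<not> hamming_dist n x y \<le> \<delta>}"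
    have fCx: "finite (C - {x})" using fC by simp
    have split: "(\<Sum>y\<in>C - {x}. b x y) = (\<Sum>y\<in>Cl. b x y) + (\<Sum>y\<in>Fa. b x y)"
    proof -
      have e: "C - {x} = Cl \<union> Fa" unfolding Cl_def Fa_def by auto
      have "finite Cl" "finite Fa" "Cl \<inter> Fa = {}" using fCx unfolding Cl_def Fa_def by auto
      then show ?thesis unfolding e by (rule sum.union_disjoint)
    qed
    have cCl: "card Cl + 1 \<le> L"
    proof -
      have xw: "x \<in> words q n" using x C by auto
      have "insert x Cl \<subseteq> {c\<in>C. hamming_dist n c x \<le> t}"
      proof
        fix c assume c: "c \<in> insert x Cl"
        show "c \<in> {c\<in>C. hamming_dist n c x \<le> t}"
        proof (cases "c = x")
          case True
          have "hamming_dist n x x = 0" unfolding hamming_dist_def by simp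
          then show ?thesis using True x by simp
        next
          case False
          then have cC: "c \<in> Cl" using c by simp
          then have "hamming_dist n x c \<le> \<delta>" "c \<in> C" unfolding Cl_def by auto
          moreover have "hamming_dist n c x = hamming_dist n x c" by (rule hd_sym)
          ultimately show ?thesis using dt by simp
        qed
      qed
      then have "card (insert x Cl) \<le> card {c\<in>C. hamming_dist n c x \<le> t}" by (rule card_mono[rotated]) (use fC in simp)
      also have "\<dots> \<le> L" using ldC xw unfolding ld_def by blast
      finally show ?thesis using fCx unfolding Cl_def by (simp add: finite_subset)
    qed
    have clsum: "(\<Sum>y\<in>Cl. b x y) \<le> B * (L-1) * (if x \<in> X then 1 else 0)"
    proof (cases "x \<in> X")
      case True
      have "(\<Sum>y\<in>Cl. b x y) \<le> (\<Sum>y\<in>Cl. B)"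
        by (intro sum_mono) (simp add: b_def B_def binomial_right_mono)
      also have "\<dots> = card Cl * B" by simp
      also have "\<dots> \<le> (L-1) * B"
      proof -
        have "card Cl \<le> L - 1" using cCl by linarith
        then show ?thesis by (rule mult_le_mono1)
      qed
      finally show ?thesis using True by (simp add: mult.commute)
    next
      case False
      then have "Cl = {}" unfolding Cl_def X_def using x by auto
      then show ?thesis by simp
    qed
    have "(\<delta>+1) * (\<Sum>y\<in>Fa. b x y) = (\<Sum>y\<in>Fa. b x y * (\<delta>+1))" by (simp add: sum_distrib_left mult.commute)
    also have "\<dots> \<le> (\<Sum>y\<in>Fa. b x y * hamming_dist n x y)"
      by (intro sum_mono mult_le_mono2) (simp add: Fa_def)
    also have "\<dots> \<le> (\<Sum>y\<in>C - {x}. b x y * hamming_dist n x y)"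
      by (rule sum_mono2[OF fCx]) (auto simp: Fa_def)
    also have "\<dots> \<le> (L-1) * B1"
    proof -
      have "(\<Sum>y\<in>C - {x}. b x y * hamming_dist n x y) + B1 \<le> L * B1"
        using far_sum[OF C ldC x ks s L1] unfolding b_def B1_def .
      moreover have "L * B1 = (L-1) * B1 + B1" using L1 by (cases L) simp_all
      ultimately show ?thesis by linarith
    qed
    finally have fa: "(\<delta>+1) * (\<Sum>y\<in>Fa. b x y) \<le> (L-1) * B1" .
    have "(\<delta>+1) * (\<Sum>y\<in>C - {x}. b x y) = (\<delta>+1) * (\<Sum>y\<in>Cl. b x y) + (\<delta>+1) * (\<Sum>y\<in>Fa. b x y)"
      using split by (simp add: algebra_simps)
    also have "(\<delta>+1) * (\<Sum>y\<in>Cl. b x y) \<le> (\<delta>+1) * (B * (L-1) * (if x \<in> X then 1 else 0))"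
      using clsum by (rule mult_le_mono2)
    finally have fin: "(\<delta>+1) * (\<Sum>y\<in>C - {x}. b x y) \<le> (\<delta>+1) * (B * (L-1) * (if x \<in> X then 1 else 0)) + (\<delta>+1) * (\<Sum>y\<in>Fa. b x y)"
      by simp
    have e2: "(\<delta>+1) * (B * (L-1) * (if x \<in> X then 1 else 0)) = (\<delta>+1) * B * (L-1) * (if x \<in> X then 1 else 0)"
      by (simp only: mult.assoc)
    show ?thesis using fin fa unfolding e2 by linarith
  qed
  have "(\<delta>+1) * (\<Sum>x\<in>C. \<Sum>y\<in>C - {x}. b x y) = (\<Sum>x\<in>C. (\<delta>+1) * (\<Sum>y\<in>C - {x}. b x y))"
    by (rule sum_distrib_left)
  also have "\<dots> \<le> (\<Sum>x\<in>C. (\<delta>+1) * B * (L-1) * (if x \<in> X then 1 else 0) + (L-1) * B1)"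
    by (intro sum_mono per)
  also have "\<dots> = (\<Sum>x\<in>C. (\<delta>+1) * B * (L-1) * (if x \<in> X then 1 else 0)) + (\<Sum>x\<in>C. (L-1) * B1)"
    by (rule sum.distrib)
  also have "(\<Sum>x\<in>C. (\<delta>+1) * B * (L-1) * (if x \<in> X then 1 else 0)) = (\<delta>+1) * B * (L-1) * (\<Sum>x\<in>C. if x \<in> X then 1 else 0)"
    by (rule sum_distrib_left[symmetric])
  also have "(\<Sum>x\<in>C. (L-1) * B1) = card C * ((L-1) * B1)" by simp
  also have "(\<Sum>x\<in>C. if x \<in> X then 1 else 0) = card X"
  proof -
    have "X = {x\<in>C. x \<in> X}" unfolding X_def by auto
    then show ?thesis using card_filter_sum[OF fC, of "\<lambda>x. x \<in> X"] by simp
  qed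
  finally have T: "(\<delta>+1) * (\<Sum>x\<in>C. \<Sum>y\<in>C - {x}. b x y) \<le> (\<delta>+1) * B * (L-1) * card X + card C * ((L-1) * B1)" .
  have M: "B * card C \<le> B * q^k + (\<Sum>x\<in>C. \<Sum>y\<in>C - {x}. b x y)"
    using main_count[OF C kn] unfolding B_def b_def .
  have sh: "(k+1) * B1 = (n-k) * B" unfolding B1_def B_def by (rule binom_shift)
  have T': "(\<delta>+1) * (\<Sum>x\<in>C. \<Sum>y\<in>C - {x}. b x y) \<le> (\<delta>+1) * B * (L-1) * card X + card C * ((L-1) * B1)"
    using T .
  show ?thesis using final_arith[OF Bpos M T' sh] unfolding X_def .
qed

lemma bound_n:
  assumes C: "C \<subseteq> words q n" and ldC: "ld q n t L C" and ks: "k + s = n" and s: "1 \<le> s" "L*s \<le> (L+1)*t"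
    and L1: "1 \<le> L" and d: "2*\<delta> \<le> t" and s2: "s2 \<le> n" "(L div 2)*s2 \<le> (L div 2 + 1)*(t - \<delta>)"
    and eps: "real (L-1) * real (n-k) \<le> e * real ((k+1)*(\<delta>+1))"
  shows "real (card C) * (1 - e) \<le> real q^k + real ((L-1)*L*(L div 2)) * real q^(n-s2)"
proof -
  define X where "X = {x\<in>C. \<exists>y\<in>C. y \<noteq> x \<and> hamming_dist n x y \<le> \<delta>}"
  have dt: "\<delta> \<le> t" using d by simp
  have kb: "(k+1)*(\<delta>+1)*card C \<le> (k+1)*(\<delta>+1)*(q^k + (L-1)*card X) + (L-1)*(n-k)*card C"
    using key_bound[OF C ldC ks s L1 dt] unfolding X_def .
  have xb: "card X \<le> L * ((L div 2) * q^(n - s2))"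
    using X_bound[OF C ldC d s2] unfolding X_def .
  define P where "P = real ((k+1)*(\<delta>+1))"
  have "(k+1)*(\<delta>+1) > 0" by simp
  then have Ppos: "P > 0" unfolding P_def by (simp only: of_nat_0_less_iff)
  have kbr: "P * real (card C) \<le> P * (real q^k + real (L-1) * real (card X)) + real (L-1) * real (n-k) * real (card C)"
  proof -
    have "real ((k+1)*(\<delta>+1)*card C) \<le> real ((k+1)*(\<delta>+1)*(q^k + (L-1)*card X) + (L-1)*(n-k)*card C)"
      using kb by linarith
    then show ?thesis unfolding P_def by (simp only: of_nat_mult of_nat_add of_nat_power mult.assoc)
  qed
  have "real (L-1) * real (n-k) * real (card C) \<le> e * P * real (card C)"
    using eps unfolding P_def by (intro mult_right_mono) auto
  with kbr have "P * real (card C) \<le> P * (real q^k + real (L-1) * real (card X)) + e * P * real (card C)"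
    by linarith
  then have "P * (real (card C) * (1 - e)) \<le> P * (real q^k + real (L-1) * real (card X))"
    by (simp add: algebra_simps)
  then have A: "real (card C) * (1 - e) \<le> real q^k + real (L-1) * real (card X)"
    using Ppos by simp
  have "real (L-1) * real (card X) \<le> real (L-1) * real (L * ((L div 2) * q^(n - s2)))"
  proof (rule mult_left_mono)
    show "real (card X) \<le> real (L * ((L div 2) * q^(n - s2)))" using xb by (simp only: of_nat_le_iff)
  qed simp
  also have "\<dots> = real ((L-1)*L*(L div 2)) * real q^(n-s2)" by (simp only: of_nat_mult of_nat_power mult.assoc)
  finally show ?thesis using A by linarith
qed

lemma pow_shift:
  fixes \<gamma> :: real
  assumes q: "2 \<le> q" and ss: "s \<le> s2" "s2 \<le> n" and m: "real (s2 - s) \<ge> \<gamma> * real n - 2"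
  shows "real q^(n-s2) \<le> real q^(n-s) * (4 * (2 powr (-\<gamma>))^n)"
proof -
  define m where "m = s2 - s"
  have e1: "n - s = (n - s2) + m" unfolding m_def using ss by simp
  have "(2::real)^m * (4 * (2 powr (-\<gamma>))^n) = 2 powr (real m) * (2 powr 2 * 2 powr (-\<gamma> * real n))"
    by (simp add: powr_realpow[symmetric] powr_powr)
  also have "\<dots> = 2 powr (real m + 2 - \<gamma> * real n)"
  proof -
    have e: "real m + 2 - \<gamma> * real n = (real m + (-\<gamma> * real n)) + 2" by simp
    have "2 powr (real m + 2 - \<gamma> * real n) = 2 powr (real m) * 2 powr (-\<gamma> * real n) * 2 powr 2"
      unfolding e powr_add by simp
    then show ?thesis by simp
  qed
  also have "\<dots> \<ge> 1" using m unfolding m_def by (intro ge_one_powr_ge_zero) auto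
  finally have one: "1 \<le> (2::real)^m * (4 * (2 powr (-\<gamma>))^n)" .
  have qm: "(2::real)^m \<le> real q^m" using q by (intro power_mono) auto
  have pos: "0 \<le> 4 * (2 powr (-\<gamma>))^n" by simp
  have "real q^(n-s2) = real q^(n-s2) * 1" by simp
  also have "\<dots> \<le> real q^(n-s2) * ((2::real)^m * (4 * (2 powr (-\<gamma>))^n))"
    using one by (intro mult_left_mono) auto
  also have "\<dots> \<le> real q^(n-s2) * (real q^m * (4 * (2 powr (-\<gamma>))^n))"
    using qm pos by (intro mult_left_mono mult_right_mono) auto
  also have "\<dots> = real q^(n-s) * (4 * (2 powr (-\<gamma>))^n)" unfolding e1 by (simp add: power_add)
  finally show ?thesis .
qed


theorem corollary3p2:
  fixes L :: nat and r :: real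
  assumes "L \<ge> 1" and "0 \<le> r" and "r < real L / (real L + 1)"
  shows "\<exists>(N::nat) (g::nat \<Rightarrow> real). (\<forall>n. g n \<ge> 0) \<and> g \<longlonglongrightarrow> 0 \<and>
     (\<forall>q n C. q \<ge> max 2 L \<longrightarrow> n \<ge> N \<longrightarrow> (\<exists>k::nat. r * real n = real k) \<longrightarrow>
        C \<subseteq> words q n \<longrightarrow> list_decodable q n r L C \<longrightarrow>
        real (card C) \<le> (1 + g n) * real q powi (int n - \<lfloor>(real L + 1) / real L * r * real n\<rfloor>))"
proof (cases "r = 0")
  case True
  have main: "real (card C) \<le> (1 + 0) * real q powi (int n - \<lfloor>(real L + 1) / real L * r * real n\<rfloor>)"
    if "C \<subseteq> words q n" for q n C
  proof -
    have "card C \<le> card (words q n)" using that finite_words by (rule card_mono[rotated])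
    then have "real (card C) \<le> real q ^ n" using card_words[of q n] by (metis of_nat_le_iff of_nat_power)
    then show ?thesis using True by simp
  qed
  show ?thesis
    by (rule exI[of _ 0], rule exI[of _ "\<lambda>_. 0"]) (use main in auto)
next
  case False
  then have rpos: "r > 0" using assms(2) by simp
  have Lpos: "real L > 0" using assms(1) by simp
  have L1: "1 \<le> L" using assms(1) .
  have hr: "(real L + 1) * r < real L"
    using assms(3) Lpos by (simp add: less_divide_eq mult.commute)
  define \<beta> where "\<beta> = 1 - (real L + 1) * r / real L"
  have \<beta>pos: "\<beta> > 0" unfolding \<beta>_def using hr Lpos by (simp add: divide_less_eq)
  define c0 where "c0 = r / (4 * real L)"
  have c0pos: "c0 > 0" unfolding c0_def using rpos Lpos by simp
  define \<gamma> where "\<gamma> = min \<beta> c0"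
  have \<gamma>pos: "\<gamma> > 0" unfolding \<gamma>_def using \<beta>pos c0pos by simp
  define K where "K = real ((L-1)*L*(L div 2))"
  have K0: "K \<ge> 0" unfolding K_def by simp
  define E where "E = real (L-1) / (\<beta> * c0)"
  have E0: "E \<ge> 0" unfolding E_def using \<beta>pos c0pos by simp
  define \<rho> where "\<rho> = (2::real) powr (-\<gamma>)"
  have \<rho>0: "\<rho> > 0" unfolding \<rho>_def by simp
  have \<rho>1: "\<rho> < 1" unfolding \<rho>_def using \<gamma>pos by (intro powr_less_one) auto
  define N where "N = nat \<lceil>1/r + 2*E + 2/\<gamma>\<rceil> + 1"
  have Nge: "real N \<ge> 1/r + 2*E + 2/\<gamma>" unfolding N_def by linarith
  define h where "h = (\<lambda>n::nat. (1 + K * (4 * \<rho>^n)) / (1 - E / real n) - 1)"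
  define g where "g = (\<lambda>n::nat. if N \<le> n then h n else 0)"
  have nfacts: "1/r \<le> real n" "E / real n \<le> 1/2" "2 \<le> \<gamma> * real n" "0 < real n" if "N \<le> n" for n
  proof -
    have nN: "real N \<le> real n" using that by simp
    have p1: "1/r > 0" "2/\<gamma> > 0" using rpos \<gamma>pos by auto
    show n1: "1/r \<le> real n" using Nge nN p1 E0 by linarith
    show n0: "0 < real n" using n1 p1 by linarith
    have "2*E \<le> real n" using Nge nN p1 E0 by linarith
    then show "E / real n \<le> 1/2" using n0 by (simp add: divide_le_eq)
    have "2/\<gamma> \<le> real n" using Nge nN p1 E0 by linarith
    then show "2 \<le> \<gamma> * real n" using \<gamma>pos by (simp add: divide_le_eq mult.commute)
  qed
  have hnn: "h n \<ge> 0" if "N \<le> n" for n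
  proof -
    have a: "E / real n \<le> 1/2" "0 < real n" using nfacts[OF that] by auto
    have b: "0 \<le> E / real n" using E0 a(2) by simp
    have num: "1 \<le> 1 + K * (4 * \<rho>^n)" using K0 \<rho>0 by simp
    have den: "0 < 1 - E / real n" "1 - E / real n \<le> 1" using a b by auto
    have "1 * (1 - E / real n) \<le> 1 + K * (4 * \<rho>^n)" using num den by simp
    then have "1 \<le> (1 + K * (4 * \<rho>^n)) / (1 - E / real n)"
      using pos_le_divide_eq[OF den(1)] by blast
    then show ?thesis unfolding h_def by simp
  qed
  have gnn: "\<forall>n. g n \<ge> 0" unfolding g_def using hnn by simp
  have hlim: "h \<longlonglongrightarrow> 0"
  proof -
    have l1: "(\<lambda>n. 1 + K * (4 * \<rho>^n)) \<longlonglongrightarrow> 1 + K * (4 * 0)"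
      by (intro tendsto_intros) (use \<rho>0 \<rho>1 in simp)
    have l2: "(\<lambda>n. E / real n) \<longlonglongrightarrow> 0"
      by (intro tendsto_divide_0[OF tendsto_const] filterlim_at_top_imp_at_infinity filterlim_real_sequentially)
    have l3: "(\<lambda>n. 1 - E / real n) \<longlonglongrightarrow> 1 - 0" by (intro tendsto_intros l2)
    have "(\<lambda>n. (1 + K * (4 * \<rho>^n)) / (1 - E / real n) - 1) \<longlonglongrightarrow> (1 + K * (4 * 0)) / (1 - 0) - 1"
      by (intro tendsto_intros l1 l3) simp
    then show ?thesis unfolding h_def by simp
  qed
  have glim: "g \<longlonglongrightarrow> 0"
  proof (rule Lim_transform_eventually[OF hlim])
    show "\<forall>\<^sub>F n in sequentially. h n = g n" unfolding g_def eventually_sequentially by (intro exI[of _ N]) auto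
  qed
  have main: "real (card C) \<le> (1 + g n) * real q powi (int n - \<lfloor>(real L + 1) / real L * r * real n\<rfloor>)"
    if q: "q \<ge> max 2 L" and nN: "n \<ge> N" and ex: "\<exists>k::nat. r * real n = real k"
      and CW: "C \<subseteq> words q n" and ldec: "list_decodable q n r L C" for q n C
  proof -
    obtain t :: nat where t: "r * real n = real t" using ex by blast
    note nf = nfacts[OF nN]
    define s where "s = (L+1)*t div L"
    define k where "k = n - s"
    define \<delta> where "\<delta> = nat \<lfloor>c0 * real n\<rfloor>"
    define L2 where "L2 = L div 2"
    define t2 where "t2 = t - \<delta>"
    define s2 where "s2 = (if L2 = 0 then n else min n ((L2+1)*t2 div L2))"
    have ldC: "ld q n t L C" unfolding ld_def
    proof
      fix v assume v: "v \<in> words q n"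
      have "hamming_ball q n (r * real n) v \<inter> C = {c\<in>C. hamming_dist n c v \<le> t}"
        unfolding hamming_ball_def t using CW by auto
      then show "card {c\<in>C. hamming_dist n c v \<le> t} \<le> L" using ldec v unfolding list_decodable_def by metis
    qed
    have Ls: "L*s \<le> (L+1)*t" unfolding s_def using div_times_less_eq_dividend[of "(L+1)*t" L] by (simp add: mult.commute)
    have ts: "t \<le> s" unfolding s_def using L1 by (simp add: less_eq_div_iff_mult_less_eq)
    have t1: "1 \<le> t"
    proof -
      have "1 \<le> r * real n" using nf(1) rpos by (simp add: divide_le_eq mult.commute)
      then show ?thesis using t by simp
    qed
    have s1: "1 \<le> s" using t1 ts by simp
    have sreal: "real s \<le> real t + real t / real L"
    proof -
      have "real L * real s \<le> (real L + 1) * real t" using Ls by (metis of_nat_1 of_nat_add of_nat_le_iff of_nat_mult)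
      then show ?thesis using Lpos by (simp add: field_simps)
    qed
    have tL: "real t / real L = r * real n / real L" using t by simp
    have \<beta>n: "\<beta> * real n = real n - real t - real t / real L"
      unfolding \<beta>_def using Lpos t by (simp add: field_simps)
    have sn: "s \<le> n"
    proof -
      have "\<beta> * real n > 0" using \<beta>pos nf(4) by simp
      then have "real s < real n" using sreal \<beta>n by linarith
      then show ?thesis by simp
    qed
    have ks: "k + s = n" unfolding k_def using sn by simp
    have \<delta>le: "real \<delta> \<le> c0 * real n" "c0 * real n < real \<delta> + 1"
    proof -
      have "0 \<le> c0 * real n" using c0pos by simp
      then have "real \<delta> = of_int \<lfloor>c0 * real n\<rfloor>" unfolding \<delta>_def by simp
      then show "real \<delta> \<le> c0 * real n" "c0 * real n < real \<delta> + 1" by linarith+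
    qed
    have c0n: "c0 * real n = real t / real L / 4" unfolding c0_def using t by (simp add: field_simps)
    have d2: "2*\<delta> \<le> t"
    proof -
      have "real t * 1 \<le> real t * real L" using L1 by (intro mult_left_mono) auto
      then have "real t / real L \<le> real t" using Lpos by (simp add: divide_le_eq)
      moreover have "0 \<le> real t / real L" by simp
      moreover have "4 * real \<delta> \<le> real t / real L" using \<delta>le(1) c0n by simp
      ultimately have "2 * real \<delta> \<le> real t" by linarith
      then show ?thesis by linarith
    qed
    have s2n: "s2 \<le> n" unfolding s2_def by simp
    have s2L: "L2*s2 \<le> (L2+1)*t2"
    proof (cases "L2 = 0")
      case True then show ?thesis by simp
    next
      case False
      have "L2 * s2 \<le> L2 * ((L2+1)*t2 div L2)" unfolding s2_def using False by simp
      also have "\<dots> \<le> (L2+1)*t2" by (simp add: mult.commute)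
      finally show ?thesis .
    qed
    define e where "e = E / real n"
    have eps: "real (L-1) * real (n-k) \<le> e * real ((k+1)*(\<delta>+1))"
    proof -
      have nk: "real (n - k) \<le> real n" by simp
      have k1: "\<beta> * real n \<le> real (k+1)"
      proof -
        have "real k = real n - real s" unfolding k_def using sn by simp
        then show ?thesis using \<beta>n sreal by simp
      qed
      have d1: "c0 * real n \<le> real (\<delta>+1)" using \<delta>le(2) by simp
      have "\<beta> * real n * (c0 * real n) \<le> real (k+1) * real (\<delta>+1)"
        using k1 d1 \<beta>pos c0pos nf(4) by (intro mult_mono) auto
      then have A: "\<beta> * c0 * real n * real n \<le> real ((k+1)*(\<delta>+1))" by (simp add: algebra_simps)
      have "real (L-1) * real (n-k) \<le> real (L-1) * real n" using nk by (intro mult_left_mono) auto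
      also have "\<dots> = e * (\<beta> * c0 * real n * real n)"
        unfolding e_def E_def using \<beta>pos c0pos nf(4) by (simp add: field_simps)
      also have "\<dots> \<le> e * real ((k+1)*(\<delta>+1))"
        using A E0 nf(4) unfolding e_def by (intro mult_left_mono) auto
      finally show ?thesis .
    qed
    have B: "real (card C) * (1 - e) \<le> real q^k + K * real q^(n-s2)"
      using bound_n[OF CW ldC ks s1 Ls L1 d2 s2n] s2L eps unfolding K_def L2_def t2_def by blast
    have sshift: "real s2 - real s \<ge> \<gamma> * real n - 2"
    proof -
      have base: "real n - real s \<ge> \<gamma> * real n - 2"
      proof -
        have "\<gamma> * real n \<le> \<beta> * real n" unfolding \<gamma>_def using nf(4) by (intro mult_right_mono) auto
        then show ?thesis using \<beta>n sreal by linarith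
      qed
      show ?thesis
      proof (cases "s2 = n")
        case True then show ?thesis using base by simp
      next
        case ns: False
        then have L2p: "L2 \<noteq> 0" unfolding s2_def by (cases "L2 = 0") auto
        define X where "X = (L2+1)*t2 div L2"
        have s2X: "s2 = X" using ns L2p unfolding s2_def X_def by auto
        have "(L2+1)*t2 = X * L2 + (L2+1)*t2 mod L2" unfolding X_def by (rule div_mult_mod_eq[symmetric])
        moreover have "(L2+1)*t2 mod L2 < L2" using L2p by simp
        ultimately have "(L2+1)*t2 \<le> X * L2 + L2" by linarith
        then have "(real L2 + 1) * real t2 \<le> real X * real L2 + real L2"
          by (metis of_nat_1 of_nat_add of_nat_le_iff of_nat_mult)
        then have F1: "real X \<ge> real t2 + real t2 / real L2 - 1" using L2p by (simp add: field_simps)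
        have dt: "\<delta> \<le> t" using d2 by simp
        have F4: "real t2 = real t - real \<delta>" unfolding t2_def using dt by simp
        have L2L: "2 * real L2 \<le> real L" unfolding L2_def by linarith
        have F2: "real t2 / real L2 \<ge> 2 * (real t / real L) - 2 * (real \<delta> / real L)"
        proof -
          have "real t2 / real L2 \<ge> real t2 / (real L / 2)"
            using L2p L2L by (intro divide_left_mono) auto
          also have "real t2 / (real L / 2) = 2 * (real t / real L) - 2 * (real \<delta> / real L)"
            using F4 Lpos by (simp add: field_simps)
          finally show ?thesis .
        qed
        have "real \<delta> * 1 \<le> real \<delta> * real L" using L1 by (intro mult_left_mono) auto
        then have F6: "real \<delta> / real L \<le> real \<delta>" using Lpos by (simp add: divide_le_eq)
        have F5: "4 * real \<delta> \<le> real t / real L" using \<delta>le(1) c0n by simp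
        have G: "4 * (\<gamma> * real n) \<le> real t / real L"
        proof -
          have "\<gamma> * real n \<le> c0 * real n" unfolding \<gamma>_def using nf(4) by (intro mult_right_mono) auto
          then show ?thesis using c0n by simp
        qed
        show ?thesis using F1 F2 F4 F5 F6 G sreal s2X by linarith
      qed
    qed
    have ss2: "s \<le> s2" using sshift nf(3) by linarith
    have P: "real q^(n-s2) \<le> real q^(n-s) * (4 * \<rho>^n)"
    proof -
      have q2: "2 \<le> q" using q by simp
      have "real (s2 - s) \<ge> \<gamma> * real n - 2" using sshift ss2 by simp
      from pow_shift[OF q2 ss2 s2n this] show ?thesis unfolding \<rho>_def .
    qed
    have e12: "e \<le> 1/2" "0 \<le> e" unfolding e_def using nf E0 by auto
    have "real (card C) * (1 - e) \<le> real q^k * (1 + K * (4 * \<rho>^n))"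
    proof -
      have "K * real q^(n-s2) \<le> K * (real q^(n-s) * (4 * \<rho>^n))" using P K0 by (rule mult_left_mono)
      then show ?thesis using B unfolding k_def by (simp add: algebra_simps)
    qed
    then have "real (card C) \<le> real q^k * (1 + K * (4 * \<rho>^n)) / (1 - e)"
      using e12 by (simp add: le_divide_eq)
    also have "\<dots> = (1 + h n) * real q^k" unfolding h_def e_def by simp
    also have "\<dots> = (1 + g n) * real q^k" unfolding g_def using nN by simp
    also have "real q^k = real q powi (int n - \<lfloor>(real L + 1) / real L * r * real n\<rfloor>)"
    proof -
      have "(real L + 1) / real L * r * real n = real ((L+1)*t) / real L"
        using t by (simp add: field_simps)
      then have "\<lfloor>(real L + 1) / real L * r * real n\<rfloor> = int s"
        unfolding s_def by (simp only: floor_divide_of_nat_eq)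
      then have "int n - \<lfloor>(real L + 1) / real L * r * real n\<rfloor> = int k" unfolding k_def using sn by simp
      then show ?thesis by simp
    qed
    finally show ?thesis .
  qed
  show ?thesis
    by (rule exI[of _ N], rule exI[of _ g]) (use gnn glim main in blast)
qed

end
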